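(* Let $G$ be a finite, connected, simple, bridgeless, triangle-free cubic graph, and let $\Lambda$ be a valid labeling of $\mathfrak{L}_2(G)$. Then the subgraph of $\mathfrak{L}_2(G)$ induced by the set of open edges $\{e : \lambda_e=1\}$ is a disjoint union of cycles.
   Context: For a simple graph $H$, $\mathcal{L}(H)$ denotes its line graph (vertices = edges of $H$, adjacent iff sharing an endpoint). Let $\mathcal{T}$ be the set of triangles of $\mathcal{L}(\mathcal{L}(G))$ of the form $\mathcal{L}(T)$ (the three edges of $T$) for $T$ a triangle of $\mathcal{L}(G)$. The reduced order two line graph $\mathfrak{L}_2(G)$ has the vertex set of $\mathcal{L}(\mathcal{L}(G))$ and the edges of $\mathcal{L}(\mathcal{L}(G))$ not lying in any triangle of $\mathcal{T}$. For each edge $e$ of $G$ (a vertex of $\mathcal{L}(G)$), the four edges of $\mathcal{L}(G)$ incident to $e$ are pairwise adjacent in $\mathcal{L}(\mathcal{L}(G))$; the reduced clique $\mathbb{X}_e$ is the subgraph of $\mathfrak{L}_2(G)$ on these four vertices with all edges of $\mathfrak{L}_2(G)$ between them (it is a 4-cycle). A labeling $\Lambda=(\lambda_f)$ assigns to each edge $f$ of $\mathfrak{L}_2(G)$ a label $\lambda_f\in\{0,1\}$ ($1$ = open, $0$ = closed); it is valid if for every reduced clique $\mathbb{X}$ and every vertex $v$ of $\mathbb{X}$ there are two edges $\langle v,w\rangle,\langle v,u\rangle$ of $\mathbb{X}$ with $\lambda_{\langle v,w\rangle}=1-\lambda_{\langle v,u\rangle}$. *)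

theory Defs
  imports Main
begin

type_synonym 'a ugraph = "'a set \<times> 'a set set"

definition verts :: "'a ugraph \<Rightarrow> 'a set" where "verts G = fst G"
definition edges :: "'a ugraph \<Rightarrow> 'a set set" where "edges G = snd G"

definition simple_graph :: "'a ugraph \<Rightarrow> bool" where
  "simple_graph G \<longleftrightarrow>
     (\<forall>e\<in>edges G. \<exists>u v. u \<noteq> v \<and> e = {u, v} \<and> u \<in> verts G \<and> v \<in> verts G)"

definition finite_graph :: "'a ugraph \<Rightarrow> bool" where
  "finite_graph G \<longleftrightarrow> finite (verts G)"

definition adj :: "'a ugraph \<Rightarrow> 'a \<Rightarrow> 'a \<Rightarrow> bool" where
  "adj G u v \<longleftrightarrow> {u, v} \<in> edges G"

definition connected_graph :: "'a ugraph \<Rightarrow> bool" where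
  "connected_graph G \<longleftrightarrow> verts G \<noteq> {} \<and>
     (\<forall>u\<in>verts G. \<forall>v\<in>verts G. (adj G)\<^sup>*\<^sup>* u v)"

definition is_bridge :: "'a ugraph \<Rightarrow> 'a set \<Rightarrow> bool" where
  "is_bridge G e \<longleftrightarrow> e \<in> edges G \<and>
     (\<exists>u v. e = {u, v} \<and> \<not> (adj (verts G, edges G - {e}))\<^sup>*\<^sup>* u v)"

definition bridgeless :: "'a ugraph \<Rightarrow> bool" where
  "bridgeless G \<longleftrightarrow> (\<forall>e. \<not> is_bridge G e)"

definition triangle_free :: "'a ugraph \<Rightarrow> bool" where
  "triangle_free G \<longleftrightarrow>
     \<not> (\<exists>x y z. adj G x y \<and> adj G y z \<and> adj G x z)"

definition degree :: "'a ugraph \<Rightarrow> 'a \<Rightarrow> nat" where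
  "degree G v = card {e \<in> edges G. v \<in> e}"

definition cubic :: "'a ugraph \<Rightarrow> bool" where
  "cubic G \<longleftrightarrow> (\<forall>v\<in>verts G. degree G v = 3)"

definition line_graph :: "'a ugraph \<Rightarrow> 'a set ugraph" where
  "line_graph H = (edges H, {{e, f} | e f. e \<in> edges H \<and> f \<in> edges H \<and> e \<noteq> f \<and> e \<inter> f \<noteq> {}})"

definition triangles :: "'a ugraph \<Rightarrow> 'a set set" where
  "triangles H = {{x, y, z} | x y z. x \<noteq> y \<and> y \<noteq> z \<and> x \<noteq> z \<and>
       adj H x y \<and> adj H y z \<and> adj H x z}"

text \<open>The set \<T>: for each triangle T of L(G), the triangle L(T) of L(L(G)) whose
  vertices are the three edges of T; we record it by its vertex set.\<close>
definition tri_edges :: "'a set \<Rightarrow> 'a set set" where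
  "tri_edges T = {{x, y} | x y. x \<in> T \<and> y \<in> T \<and> x \<noteq> y}"

definition calT :: "'a ugraph \<Rightarrow> 'a set set set set" where
  "calT G = tri_edges ` triangles (line_graph G)"

definition reduced_L2 :: "'a ugraph \<Rightarrow> 'a set set ugraph" where
  "reduced_L2 G = (verts (line_graph (line_graph G)),
     {f \<in> edges (line_graph (line_graph G)). \<not> (\<exists>T\<in>calT G. f \<subseteq> T)})"

definition reduced_clique :: "'a ugraph \<Rightarrow> 'a set \<Rightarrow> 'a set set ugraph" where
  "reduced_clique G e =
     (let W = {f \<in> edges (line_graph G). e \<in> f}
      in (W, {f \<in> edges (reduced_L2 G). f \<subseteq> W}))"

text \<open>Labelings: values in {0,1} on the edges of the reduced graph (1 = open, 0 = closed).\<close>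
definition labeling :: "'a ugraph \<Rightarrow> ('a set set set \<Rightarrow> nat) \<Rightarrow> bool" where
  "labeling G lam \<longleftrightarrow> (\<forall>f\<in>edges (reduced_L2 G). lam f \<in> {0, 1})"

definition valid_labeling :: "'a ugraph \<Rightarrow> ('a set set set \<Rightarrow> nat) \<Rightarrow> bool" where
  "valid_labeling G lam \<longleftrightarrow> labeling G lam \<and>
     (\<forall>e\<in>edges G. \<forall>v\<in>verts (reduced_clique G e).
        \<exists>w u. {v, w} \<in> edges (reduced_clique G e) \<and> {v, u} \<in> edges (reduced_clique G e)
              \<and> lam {v, w} = 1 - lam {v, u})"

definition edge_induced :: "'a set set \<Rightarrow> 'a ugraph" where
  "edge_induced F = (\<Union>F, F)"

definition cycle_edges :: "'a list \<Rightarrow> 'a set set" where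
  "cycle_edges xs = {{xs ! i, xs ! ((i + 1) mod length xs)} | i. i < length xs}"

definition is_cycle_list :: "'a list \<Rightarrow> bool" where
  "is_cycle_list xs \<longleftrightarrow> distinct xs \<and> length xs \<ge> 3"

definition disjoint_union_of_cycles :: "'a ugraph \<Rightarrow> bool" where
  "disjoint_union_of_cycles H \<longleftrightarrow>
     (\<exists>Cs. finite Cs \<and> (\<forall>c\<in>Cs. is_cycle_list c) \<and>
        (\<forall>c\<in>Cs. \<forall>d\<in>Cs. c \<noteq> d \<longrightarrow> set c \<inter> set d = {}) \<and>
        verts H = (\<Union>c\<in>Cs. set c) \<and> edges H = (\<Union>c\<in>Cs. cycle_edges c))"

end

theory Submission
  imports Defs
begin

definition deg2 :: "'b set set \<Rightarrow> bool" where
  "deg2 F \<longleftrightarrow> (\<forall>v\<in>\<Union>F. \<exists>a b. a \<noteq> b \<and> a \<noteq> v \<and> b \<noteq> v \<and> {x\<in>F. v\<in>x} = {{v,a},{v,b}})"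

lemma deg2D:
  assumes "deg2 F" "v \<in> \<Union>F"
  obtains a b where "a \<noteq> b" "a \<noteq> v" "b \<noteq> v" "{x\<in>F. v\<in>x} = {{v,a},{v,b}}"
proof -
  have "\<exists>a b. a \<noteq> b \<and> a \<noteq> v \<and> b \<noteq> v \<and> {x\<in>F. v\<in>x} = {{v,a},{v,b}}"
    using assms unfolding deg2_def by (rule bspec)
  then show ?thesis using that by (elim exE conjE)
qed

lemma deg2_nbr:
  assumes "deg2 F" "{v,x} \<in> F" "{v,y} \<in> F" "{v,z} \<in> F" "x \<noteq> v" "y \<noteq> v" "z \<noteq> v"
  shows "x = y \<or> y = z \<or> x = z"
proof -
  have "v \<in> \<Union>F" using assms(2) by blast
  obtain a b where ab: "a \<noteq> b" "a \<noteq> v" "b \<noteq> v" "{x\<in>F. v\<in>x} = {{v,a},{v,b}}"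
    using assms(1) \<open>v \<in> \<Union>F\<close> by (rule deg2D)
  have "{v,x} \<in> {x\<in>F. v\<in>x}" "{v,y} \<in> {x\<in>F. v\<in>x}" "{v,z} \<in> {x\<in>F. v\<in>x}"
    using assms(2-4) by auto
  then have "{v,x} \<in> {{v,a},{v,b}}" "{v,y} \<in> {{v,a},{v,b}}" "{v,z} \<in> {{v,a},{v,b}}"
    unfolding ab(4) .
  then have "x \<in> {a,b}" "y \<in> {a,b}" "z \<in> {a,b}" using assms(5-7) ab
    by (auto simp: doubleton_eq_iff)
  then show ?thesis by auto
qed

definition is_path :: "'b set set \<Rightarrow> 'b list \<Rightarrow> bool" where
  "is_path F xs \<longleftrightarrow> distinct xs \<and> xs \<noteq> [] \<and> set xs \<subseteq> \<Union>F \<and>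
     (\<forall>i. Suc i < length xs \<longrightarrow> {xs!i, xs!Suc i} \<in> F)"

lemma suc_mod: "i < n \<Longrightarrow> Suc i mod n = (if Suc i = n then 0 else Suc i)"
  by auto

lemma find_cycle:
  assumes fin: "finite F" and two: "\<forall>x\<in>F. \<exists>u v. u\<noteq>v \<and> x={u,v}"
    and d2: "deg2 F" and ne: "F \<noteq> {}"
  shows "\<exists>xs. distinct xs \<and> length xs \<ge> 3 \<and> cycle_edges xs \<subseteq> F"
proof -
  have finU: "finite (\<Union>F)"
  proof (rule finite_Union[OF fin])
    fix M assume "M \<in> F"
    then obtain u v where "M = {u,v}" using two by blast
    then show "finite M" by simp
  qed
  define P where "P = {xs. is_path F xs}"
  have "P \<subseteq> {xs. set xs \<subseteq> \<Union>F \<and> length xs \<le> card (\<Union>F)}"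
  proof
    fix xs assume "xs \<in> P"
    then have d: "distinct xs" and s: "set xs \<subseteq> \<Union>F" unfolding P_def is_path_def by auto
    have "length xs = card (set xs)" using distinct_card[OF d] by simp
    also have "\<dots> \<le> card (\<Union>F)" by (rule card_mono[OF finU s])
    finally show "xs \<in> {xs. set xs \<subseteq> \<Union>F \<and> length xs \<le> card (\<Union>F)}" using s by simp
  qed
  then have finP: "finite P" by (rule finite_subset[OF _ finite_lists_length_le[OF finU]])
  obtain x0 where "x0 \<in> F" using ne by auto
  then obtain u v where uv: "u \<noteq> v" "{u,v} \<in> F" using two by metis
  have "[u,v] \<in> P" unfolding P_def is_path_def using uv by auto
  then have Pne: "P \<noteq> {}" by auto
  define m where "m = Max (length ` P)"
  have "m \<in> length ` P" unfolding m_def using finP Pne by auto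
  then obtain xs where xsP: "xs \<in> P" and lxs: "length xs = m" by auto
  have maxl: "length ys \<le> length xs" if "ys \<in> P" for ys
    using that finP lxs unfolding m_def by auto
  have "length [u,v] \<le> length xs" using maxl \<open>[u,v] \<in> P\<close> .
  then have n2: "length xs \<ge> 2" by simp
  define n where "n = length xs"
  have pth: "is_path F xs" using xsP P_def by auto
  have dxs: "distinct xs" and step: "\<And>i. Suc i < n \<Longrightarrow> {xs!i, xs!Suc i} \<in> F"
    and sub: "set xs \<subseteq> \<Union>F"
    using pth unfolding is_path_def n_def by auto
  define z where "z = xs ! (n-1)"
  have e1: "{xs!(n-2), z} \<in> F"
  proof -
    have "Suc (n-2) = n - 1" "Suc (n-2) < n" using n2 n_def by auto
    then show ?thesis using step[of "n-2"] unfolding z_def by simp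
  qed
  have "z \<in> set xs" using n2 unfolding z_def n_def by simp
  then have zU: "z \<in> \<Union>F" using sub by blast
  have ne2: "xs!(n-2) \<noteq> z" unfolding z_def using dxs n2 unfolding n_def
    by (simp add: nth_eq_iff_index_eq)
  obtain a b where ab: "a \<noteq> b" "a \<noteq> z" "b \<noteq> z" "{x\<in>F. z\<in>x} = {{z,a},{z,b}}"
    using d2 zU by (rule deg2D)
  have "{z, xs!(n-2)} \<in> {x\<in>F. z\<in>x}" using e1 by (auto simp: insert_commute)
  then have "{z, xs!(n-2)} \<in> {{z,a},{z,b}}" unfolding ab(4) .
  then have "xs!(n-2) \<in> {a,b}" using ne2 by (auto simp: doubleton_eq_iff)
  then obtain y where y: "{z,y} \<in> F" "y \<noteq> xs!(n-2)" "y \<noteq> z"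
  proof -
    have "{z,a} \<in> {x\<in>F. z\<in>x}" "{z,b} \<in> {x\<in>F. z\<in>x}" unfolding ab(4) by auto
    then have "{z,a} \<in> F" "{z,b} \<in> F" by auto
    then show ?thesis using that ab \<open>xs!(n-2) \<in> {a,b}\<close> by auto
  qed
  have yin: "y \<in> set xs"
  proof (rule ccontr)
    assume "y \<notin> set xs"
    have "is_path F (xs @ [y])" unfolding is_path_def
    proof (intro conjI allI impI)
      show "distinct (xs @ [y])" using dxs \<open>y \<notin> set xs\<close> by simp
      show "xs @ [y] \<noteq> []" by simp
      show "set (xs @ [y]) \<subseteq> \<Union>F" using sub y(1) by auto
      fix i assume i: "Suc i < length (xs @ [y])"
      show "{(xs @ [y]) ! i, (xs @ [y]) ! Suc i} \<in> F"
      proof (cases "Suc i < n")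
        case True then show ?thesis using step[OF True] by (simp add: nth_append n_def)
      next
        case False
        then have "i = n - 1" using i n_def by simp
        then have ii: "Suc i = length xs" "i < length xs" "i = length xs - 1" using n2 n_def by auto
        have "(xs@[y])!i = z" unfolding z_def n_def using ii(2,3) by (simp add: nth_append)
        moreover have "(xs@[y])!Suc i = y" unfolding ii(1) by simp
        ultimately have "(xs@[y])!i = z" "(xs@[y])!Suc i = y" by auto
        then show ?thesis using y(1) by (simp add: insert_commute)
      qed
    qed
    then have "length (xs @ [y]) \<le> length xs" using maxl P_def by blast
    then show False by simp
  qed
  then obtain j where j: "j < n" "y = xs ! j" by (auto simp: in_set_conv_nth n_def)
  have jn1: "j \<noteq> n - 1" using y(3) j unfolding z_def by auto
  have jn2: "j \<noteq> n - 2" using y(2) j by auto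
  have j0: "j = 0"
  proof (rule ccontr)
    assume "j \<noteq> 0"
    have s1: "{xs!(j-1), y} \<in> F" using step[of "j-1"] j \<open>j \<noteq> 0\<close> by simp
    have s2: "{y, xs!(j+1)} \<in> F" using step[of "j"] j jn1 jn2 by simp
    have s3: "{y, z} \<in> F" using y(1) by (simp add: insert_commute)
    have "xs!(j-1) = xs!(j+1) \<or> xs!(j+1) = z \<or> xs!(j-1) = z"
      apply (rule deg2_nbr[OF d2, of y])
      using s1 s2 s3 dxs j jn1 jn2 \<open>j \<noteq> 0\<close> unfolding z_def n_def
      by (auto simp: insert_commute nth_eq_iff_index_eq)
    then show False using dxs j jn1 jn2 \<open>j \<noteq> 0\<close> unfolding z_def n_def
      by (auto simp: nth_eq_iff_index_eq)
  qed
  have n3: "n \<ge> 3" using jn2 j0 n2 n_def by simp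
  have close: "{xs!(n-1), xs!0} \<in> F" using y(1) j j0 unfolding z_def by simp
  have "cycle_edges xs \<subseteq> F"
  proof
    fix x assume "x \<in> cycle_edges xs"
    then obtain i where i: "i < n" "x = {xs!i, xs!((i+1) mod n)}"
      unfolding cycle_edges_def n_def by auto
    show "x \<in> F"
    proof (cases "Suc i = n")
      case True then have "i = n - 1" by simp
      then show ?thesis using i close True by simp
    next
      case False then show ?thesis using i step[of i] by simp
    qed
  qed
  then show ?thesis using dxs n3 n_def by blast
qed

lemma cycle_edge_mem: "i < length xs \<Longrightarrow> {xs!i, xs!((i+1) mod length xs)} \<in> cycle_edges xs"
  unfolding cycle_edges_def by blast

lemma cycle_edges_sub: "x \<in> cycle_edges xs \<Longrightarrow> x \<subseteq> set xs"
proof -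
  assume "x \<in> cycle_edges xs"
  then obtain i where i: "i < length xs" "x = {xs!i, xs!((i+1) mod length xs)}"
    unfolding cycle_edges_def by blast
  have "(i+1) mod length xs < length xs" using i(1) by (intro mod_less_divisor) linarith
  then show ?thesis using i by auto
qed

lemma cycle_closed:
  assumes d2: "deg2 F" and dxs: "distinct xs" and n3: "length xs \<ge> 3"
    and CF: "cycle_edges xs \<subseteq> F" and xF: "x \<in> F" and vx: "v \<in> x" and vs: "v \<in> set xs"
  shows "x \<in> cycle_edges xs"
proof -
  define n where "n = length xs"
  obtain i where i: "i < n" "v = xs!i" using vs by (auto simp: in_set_conv_nth n_def)
  define s where "s = (if Suc i = n then 0 else Suc i)"
  define p where "p = (if i = 0 then n - 1 else i - 1)"
  have s_mod: "(i+1) mod n = s" using i s_def by auto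
  have p_lt: "p < n" using i p_def by auto
  have p_mod: "(p+1) mod n = i" using i p_def n3 n_def by auto
  have s_lt: "s < n" using i s_def n3 n_def by auto
  have sp: "s \<noteq> p" using i s_def p_def n3 n_def by auto
  have si: "s \<noteq> i" using i s_def n3 n_def by auto
  have pi: "p \<noteq> i" using i p_def n3 n_def by auto
  have es: "{v, xs!s} \<in> cycle_edges xs" using cycle_edge_mem[of i xs] i s_mod n_def by simp
  have ep: "{v, xs!p} \<in> cycle_edges xs" using cycle_edge_mem[of p xs] p_lt p_mod i n_def
    by (simp add: insert_commute)
  have xsp: "xs!s \<noteq> xs!p" "xs!s \<noteq> v" "xs!p \<noteq> v"
    using dxs sp si pi s_lt p_lt i n_def by (auto simp: nth_eq_iff_index_eq)
  have "v \<in> \<Union>F" using xF vx by blast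
  obtain a b where ab: "a \<noteq> b" "a \<noteq> v" "b \<noteq> v" "{x\<in>F. v\<in>x} = {{v,a},{v,b}}"
    using d2 \<open>v \<in> \<Union>F\<close> by (rule deg2D)
  have "{v, xs!s} \<in> {x\<in>F. v\<in>x}" "{v, xs!p} \<in> {x\<in>F. v\<in>x}" "x \<in> {x\<in>F. v\<in>x}"
    using es ep CF xF vx by auto
  then have m: "{v, xs!s} \<in> {{v,a},{v,b}}" "{v, xs!p} \<in> {{v,a},{v,b}}" "x \<in> {{v,a},{v,b}}"
    unfolding ab(4) .
  have "xs!s \<in> {a,b}" "xs!p \<in> {a,b}" using m(1,2) xsp by (auto simp: doubleton_eq_iff)
  then have "a \<in> {xs!s, xs!p}" "b \<in> {xs!s, xs!p}" using xsp(1) ab(1) by auto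
  then have "x \<in> {{v, xs!s}, {v, xs!p}}" using m(3) by auto
  then show ?thesis using es ep by auto
qed

lemma two_reg_cycles:
  assumes "finite F" and "\<forall>x\<in>F. \<exists>u v. u\<noteq>v \<and> x={u,v}" and "deg2 F"
  shows "disjoint_union_of_cycles (edge_induced F)"
  using assms
proof (induction "card F" arbitrary: F rule: less_induct)
  case less
  note fin = less.prems(1) and two = less.prems(2) and d2 = less.prems(3)
  show ?case
  proof (cases "F = {}")
    case True
    show ?thesis unfolding disjoint_union_of_cycles_def edge_induced_def verts_def edges_def
      by (rule exI[of _ "{}"]) (simp add: True)
  next
    case False
    obtain xs where xs: "distinct xs" "length xs \<ge> 3" "cycle_edges xs \<subseteq> F"
      using find_cycle[OF fin two d2 False] by blast
    define C where "C = cycle_edges xs"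
    define F' where "F' = F - C"
    have disj: "x \<inter> set xs = {}" if "x \<in> F'" for x
    proof (rule ccontr)
      assume "x \<inter> set xs \<noteq> {}"
      then obtain v where "v \<in> x" "v \<in> set xs" by blast
      then have "x \<in> C" using cycle_closed[OF d2 xs(1,2,3)] that F'_def C_def by auto
      then show False using that F'_def by auto
    qed
    have xs0: "xs!0 \<in> set xs" using xs(2) by (intro nth_mem) (cases xs, auto)
    have "0 < length xs" using xs(2) by linarith
    then have Cne: "C \<noteq> {}" using cycle_edge_mem[of 0 xs] C_def by auto
    have "F' \<subset> F" unfolding F'_def using Cne xs(3) C_def by blast
    then have lt: "card F' < card F" by (rule psubset_card_mono[OF fin])
    have fin': "finite F'" using fin F'_def by auto
    have two': "\<forall>x\<in>F'. \<exists>u v. u\<noteq>v \<and> x={u,v}" using two F'_def by auto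
    have d2': "deg2 F'" unfolding deg2_def
    proof
      fix v assume v: "v \<in> \<Union>F'"
      then obtain x where x: "x \<in> F'" "v \<in> x" by blast
      have vn: "v \<notin> set xs" using disj[OF x(1)] x(2) by blast
      have vF: "v \<in> \<Union>F" using x F'_def by blast
      obtain a b where ab: "a \<noteq> b" "a \<noteq> v" "b \<noteq> v" "{x\<in>F. v\<in>x} = {{v,a},{v,b}}"
        using d2 vF by (rule deg2D)
      have eq: "{x\<in>F'. v\<in>x} = {x\<in>F. v\<in>x}"
        using vn cycle_edges_sub unfolding F'_def C_def by blast
      show "\<exists>a b. a \<noteq> b \<and> a \<noteq> v \<and> b \<noteq> v \<and> {x\<in>F'. v\<in>x} = {{v,a},{v,b}}"
        unfolding eq by (intro exI[of _ a] exI[of _ b] conjI ab)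
    qed
    have "disjoint_union_of_cycles (edge_induced F')"
      using less.hyps[OF lt fin' two' d2'] .
    then obtain Cs where Cs: "finite Cs" "\<forall>c\<in>Cs. is_cycle_list c"
        "\<forall>c\<in>Cs. \<forall>d\<in>Cs. c \<noteq> d \<longrightarrow> set c \<inter> set d = {}"
        "\<Union>F' = (\<Union>c\<in>Cs. set c)" "F' = (\<Union>c\<in>Cs. cycle_edges c)"
      unfolding disjoint_union_of_cycles_def edge_induced_def verts_def edges_def by auto
    have dsj: "set c \<inter> set xs = {}" if "c \<in> Cs" for c
      using that Cs(4) disj by blast
    have xsn: "xs \<notin> Cs" using dsj xs0 by blast
    have UC: "\<Union>C = set xs"
    proof
      show "\<Union>C \<subseteq> set xs" using cycle_edges_sub C_def by blast
      show "set xs \<subseteq> \<Union>C"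
      proof
        fix v assume "v \<in> set xs"
        then obtain i where "i < length xs" "v = xs!i" by (auto simp: in_set_conv_nth)
        then show "v \<in> \<Union>C" using cycle_edge_mem[of i xs] C_def by blast
      qed
    qed
    have FC: "F = C \<union> F'" using xs(3) C_def F'_def by auto
    show ?thesis unfolding disjoint_union_of_cycles_def edge_induced_def verts_def edges_def fst_conv snd_conv
    proof (intro exI[of _ "insert xs Cs"] conjI)
      show "finite (insert xs Cs)" using Cs(1) by simp
      show "\<forall>c\<in>insert xs Cs. is_cycle_list c" using Cs(2) xs unfolding is_cycle_list_def by auto
      show "\<forall>c\<in>insert xs Cs. \<forall>d\<in>insert xs Cs. c \<noteq> d \<longrightarrow> set c \<inter> set d = {}"
        using Cs(3) dsj by blast
      show "\<Union>F = (\<Union>c\<in>insert xs Cs. set c)" using FC UC Cs(4) by auto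
      show "F = (\<Union>c\<in>insert xs Cs. cycle_edges c)" using FC Cs(5) C_def by auto
    qed
  qed
qed

lemma mem_edges_LG: "x \<in> edges (line_graph H) \<longleftrightarrow>
   (\<exists>e f. x = {e,f} \<and> e \<in> edges H \<and> f \<in> edges H \<and> e \<noteq> f \<and> e \<inter> f \<noteq> {})"
  by (simp add: line_graph_def edges_def)

lemma verts_LG: "verts (line_graph H) = edges H"
  by (simp add: line_graph_def verts_def edges_def)

lemma LG_edge_at:
  assumes "x \<in> edges (line_graph H)" "v \<in> x"
  shows "\<exists>q. x = {v,q} \<and> q \<noteq> v \<and> v \<in> edges H \<and> q \<in> edges H \<and> v \<inter> q \<noteq> {}"
proof -
  obtain e f where ef: "x = {e,f}" "e \<in> edges H" "f \<in> edges H" "e \<noteq> f" "e \<inter> f \<noteq> {}"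
    using assms(1) unfolding mem_edges_LG by blast
  show ?thesis
  proof (cases "v = e")
    case True then show ?thesis using ef by (intro exI[of _ f]) simp
  next
    case False
    then have "v = f" using assms(2) ef(1) by blast
    then show ?thesis using ef by (intro exI[of _ e]) (auto simp: insert_commute)
  qed
qed

lemma adj_LG: "adj (line_graph H) x y \<longleftrightarrow> x \<in> edges H \<and> y \<in> edges H \<and> x \<noteq> y \<and> x \<inter> y \<noteq> {}"
proof
  assume "adj (line_graph H) x y"
  then have "{x,y} \<in> edges (line_graph H)" unfolding adj_def .
  then obtain e f where ef: "{x,y} = {e,f}" "e \<in> edges H" "f \<in> edges H" "e \<noteq> f" "e \<inter> f \<noteq> {}"
    unfolding mem_edges_LG by blast
  from ef(1) have "(x=e \<and> y=f) \<or> (x=f \<and> y=e)" by (simp add: doubleton_eq_iff)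
  then show "x \<in> edges H \<and> y \<in> edges H \<and> x \<noteq> y \<and> x \<inter> y \<noteq> {}"
    using ef(2-5) by (elim disjE conjE) (simp_all add: Int_commute)
next
  assume "x \<in> edges H \<and> y \<in> edges H \<and> x \<noteq> y \<and> x \<inter> y \<noteq> {}"
  then show "adj (line_graph H) x y" unfolding adj_def mem_edges_LG by blast
qed

lemma red_edges: "edges (reduced_L2 G) =
   {f \<in> edges (line_graph (line_graph G)). \<not> (\<exists>T\<in>calT G. f \<subseteq> T)}"
  by (simp add: reduced_L2_def edges_def)

lemma rc_verts: "verts (reduced_clique G e) = {f \<in> edges (line_graph G). e \<in> f}"
  by (simp add: reduced_clique_def verts_def Let_def)

lemma rc_edges: "edges (reduced_clique G e) =
   {f \<in> edges (reduced_L2 G). f \<subseteq> {f \<in> edges (line_graph G). e \<in> f}}"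
  by (simp add: reduced_clique_def edges_def Let_def)

lemma tri_edges_mem: "{a,b} \<in> tri_edges X \<Longrightarrow> a \<in> X \<and> b \<in> X"
proof -
  assume "{a,b} \<in> tri_edges X"
  then have "\<exists>x y. {a,b} = {x,y} \<and> x \<in> X \<and> y \<in> X \<and> x \<noteq> y"
    unfolding tri_edges_def mem_Collect_eq .
  then obtain x y where xy: "{a,b} = {x,y}" "x \<in> X" "y \<in> X" by blast
  from xy(1) have "(a=x \<and> b=y) \<or> (a=y \<and> b=x)" by (simp add: doubleton_eq_iff)
  then show ?thesis using xy(2,3) by (elim disjE conjE) simp_all
qed

lemma not_removed:
  assumes "f \<inter> g = {}" "f \<noteq> g" "e \<noteq> f" "e \<noteq> g"
  shows "\<not> (\<exists>T\<in>calT G. {{e,f},{e,g}} \<subseteq> T)"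
proof
  assume "\<exists>T\<in>calT G. {{e,f},{e,g}} \<subseteq> T"
  then obtain T where T1: "T \<in> calT G" and T2: "{{e,f},{e,g}} \<subseteq> T" ..
  from T1 obtain X where X1: "X \<in> triangles (line_graph G)" and XT: "T = tri_edges X"
    unfolding calT_def by (elim imageE) simp
  have X: "X \<in> triangles (line_graph G)" "{{e,f},{e,g}} \<subseteq> tri_edges X"
    using X1 T2 XT by simp_all
  obtain x y z where xyz: "X = {x,y,z}" "x \<noteq> y" "y \<noteq> z" "x \<noteq> z"
    "adj (line_graph G) x y" "adj (line_graph G) y z" "adj (line_graph G) x z"
  proof -
    have "\<exists>x y z. X = {x,y,z} \<and> x \<noteq> y \<and> y \<noteq> z \<and> x \<noteq> z \<and>
       adj (line_graph G) x y \<and> adj (line_graph G) y z \<and> adj (line_graph G) x z"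
      using X(1) unfolding triangles_def mem_Collect_eq .
    then show ?thesis using that by (elim exE conjE) (rule that, assumption+)
  qed
  have ef: "{e,f} \<in> tri_edges X" by (rule subsetD[OF X(2)]) simp
  have eg: "{e,g} \<in> tri_edges X" by (rule subsetD[OF X(2)]) simp
  have "f \<in> X" using tri_edges_mem[OF ef] by (rule conjunct2)
  have "g \<in> X" using tri_edges_mem[OF eg] by (rule conjunct2)
  have sym: "adj (line_graph G) u w \<Longrightarrow> adj (line_graph G) w u" for u w
    unfolding adj_def by (subst insert_commute)
  have "adj (line_graph G) f g"
    using \<open>f \<in> X\<close> \<open>g \<in> X\<close> assms(2) xyz(5,6,7) sym[OF xyz(5)] sym[OF xyz(6)] sym[OF xyz(7)]
    unfolding xyz(1) insert_iff empty_iff by (elim disjE) simp_all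
  then have "f \<inter> g \<noteq> {}" unfolding adj_LG by (elim conjE)
  then show False using assms(1) by simp
qed

lemma removed:
  assumes "e \<in> edges G" "f \<in> edges G" "g \<in> edges G" "e \<noteq> f" "e \<noteq> g" "f \<noteq> g"
    "e \<inter> f \<noteq> {}" "e \<inter> g \<noteq> {}" "f \<inter> g \<noteq> {}"
  shows "\<exists>T\<in>calT G. {{e,f},{e,g}} \<subseteq> T"
proof -
  have "adj (line_graph G) e f" "adj (line_graph G) f g" "adj (line_graph G) e g"
    using assms unfolding adj_LG by simp_all
  then have "{e,f,g} \<in> triangles (line_graph G)"
    unfolding triangles_def mem_Collect_eq using assms(4,5,6)
    by (intro exI[of _ e] exI[of _ f] exI[of _ g]) simp
  moreover have "{e,f} \<in> tri_edges {e,f,g}"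
    unfolding tri_edges_def mem_Collect_eq using assms(4,5,6)
    by (intro exI[of _ e] exI[of _ f]) simp
  moreover have "{e,g} \<in> tri_edges {e,f,g}"
    unfolding tri_edges_def mem_Collect_eq using assms(4,5,6)
    by (intro exI[of _ e] exI[of _ g]) simp
  ultimately show ?thesis unfolding calT_def
    by (intro bexI[of _ "tri_edges {e,f,g}"] imageI) simp_all
qed

lemma two_set:
  assumes "simple_graph G" "e \<in> edges G" "a \<in> e"
  shows "\<exists>b. e = {a,b} \<and> a \<noteq> b \<and> b \<in> verts G"
proof -
  have "\<exists>u v. u \<noteq> v \<and> e = {u, v} \<and> u \<in> verts G \<and> v \<in> verts G"
    using assms(1,2) unfolding simple_graph_def by (rule bspec)
  then obtain u v where uv: "u \<noteq> v" "e = {u,v}" "u \<in> verts G" "v \<in> verts G" by (elim exE conjE)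
  have "a = u \<or> a = v" using assms(3) uv(2) by simp
  then show ?thesis
  proof
    assume "a = u" then show ?thesis using uv by (intro exI[of _ v]) simp
  next
    assume "a = v" then show ?thesis using uv by (intro exI[of _ u]) (simp add: insert_commute)
  qed
qed

lemma not_singleton_LG: "x \<in> edges (line_graph H) \<Longrightarrow> x \<noteq> {p}"
proof
  assume "x \<in> edges (line_graph H)" "x = {p}"
  then obtain e f where ef: "x = {e,f}" "e \<noteq> f" unfolding mem_edges_LG by blast
  have "e \<in> {p}" "f \<in> {p}" using ef(1) \<open>x = {p}\<close> by (metis insertI1, metis insertI1 insertI2)
  then show False using ef(2) by simp
qed

lemma clique_nbrs:
  assumes sg: "simple_graph G" and cub: "cubic G" and tf: "triangle_free G"
    and eE: "e \<in> edges G" and fE: "f \<in> edges G" and ef: "e \<noteq> f" and efi: "e \<inter> f \<noteq> {}"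
  shows "\<exists>q1 q2. q1 \<noteq> q2 \<and> {q. {{e,f},q} \<in> edges (reduced_clique G e)} = {q1,q2}
     \<and> f \<notin> q1 \<and> f \<notin> q2 \<and> e \<in> q1 \<and> e \<in> q2"
proof -
  from efi obtain a where "a \<in> e \<inter> f" by blast
  then have ae: "a \<in> e" and af: "a \<in> f" by simp_all
  obtain b where b: "e = {a,b}" "a \<noteq> b" "b \<in> verts G" using two_set[OF sg eE ae] by (elim exE conjE)
  obtain c where c: "f = {a,c}" "a \<noteq> c" using two_set[OF sg fE af] by (elim exE conjE)
  have bf: "b \<notin> f"
  proof
    assume "b \<in> f"
    then have "b = c" using c b(2) by simp
    then show False using ef b(1) c(1) by simp
  qed
  define S where "S = {g \<in> edges G. b \<in> g}"
  have cS: "card S = 3" using cub b(3) unfolding cubic_def degree_def S_def by simp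
  have eS: "e \<in> S" using eE b(1) S_def by simp
  have "card (S - {e}) = 2" using card_Diff_singleton[OF eS] cS by simp
  then obtain h1 h2 where h12: "S - {e} = {h1,h2}" "h1 \<noteq> h2" unfolding card_2_iff by (elim exE conjE)
  have hS: "(g \<in> edges G \<and> b \<in> g \<and> g \<noteq> e) \<longleftrightarrow> g \<in> {h1,h2}" for g
  proof -
    have "g \<in> S - {e} \<longleftrightarrow> (g \<in> edges G \<and> b \<in> g \<and> g \<noteq> e)" unfolding S_def by simp
    then show ?thesis unfolding h12(1) by simp
  qed
  have hprop: "h \<in> edges G \<and> b \<in> h \<and> h \<noteq> e \<and> h \<inter> f = {} \<and> h \<noteq> f" if hh: "h \<in> {h1,h2}" for h
  proof -
    have h1: "h \<in> edges G" "b \<in> h" "h \<noteq> e" using hS[of h] hh by simp_all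
    obtain d where d: "h = {b,d}" "b \<noteq> d" using two_set[OF sg h1(1) h1(2)] by (elim exE conjE)
    have da: "d \<noteq> a"
    proof
      assume "d = a" then have "h = e" using d(1) b(1) by (simp add: insert_commute)
      then show False using h1(3) by simp
    qed
    have hf: "h \<inter> f = {}"
    proof (rule ccontr)
      assume "h \<inter> f \<noteq> {}"
      then obtain x where "x \<in> h \<inter> f" by blast
      then have x: "x \<in> h" "x \<in> f" by simp_all
      have "x \<noteq> b" using x(2) bf by metis
      then have "x = d" using x(1) d(1) by simp
      then have "d = c" using x(2) c(1) da by simp
      then have "adj G a b" "adj G b c" "adj G a c"
        unfolding adj_def using eE fE h1(1) b(1) c(1) d(1) by simp_all
      then show False using tf unfolding triangle_free_def by blast
    qed
    have "h \<noteq> f" using h1(2) bf by metis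
    then show ?thesis using h1 hf by simp
  qed
  define p where "p = {e,f}"
  have pE1: "p \<in> edges (line_graph G)" unfolding p_def mem_edges_LG using eE fE ef efi by blast
  have char: "{p,q} \<in> edges (reduced_clique G e) \<longleftrightarrow> q \<in> {{e,h1},{e,h2}}" for q
  proof
    assume "{p,q} \<in> edges (reduced_clique G e)"
    then have pq: "{p,q} \<in> edges (line_graph (line_graph G))" "\<not> (\<exists>T\<in>calT G. {p,q} \<subseteq> T)"
      and qW: "q \<in> edges (line_graph G)" "e \<in> q"
      unfolding rc_edges red_edges by simp_all
    obtain g where g: "q = {e,g}" "g \<noteq> e" "g \<in> edges G" "e \<inter> g \<noteq> {}"
      using LG_edge_at[OF qW(1) qW(2)] by (elim exE conjE)
    have "p \<noteq> q"
    proof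
      assume "p = q"
      have "{p,q} \<noteq> {p}" by (rule not_singleton_LG[OF pq(1)])
      then show False using \<open>p = q\<close> by simp
    qed
    then have gf: "g \<noteq> f" using g(1) p_def by metis
    have fg: "f \<inter> g = {}"
    proof (rule ccontr)
      assume "f \<inter> g \<noteq> {}"
      then have "\<exists>T\<in>calT G. {{e,f},{e,g}} \<subseteq> T"
        using removed[OF eE fE g(3) ef g(2)[symmetric] gf[symmetric] efi g(4)] by simp
      then show False using pq(2) g(1) p_def by simp
    qed
    have "a \<notin> g" using fg af by blast
    have "b \<in> g"
    proof -
      from g(4) obtain x where "x \<in> e \<inter> g" by blast
      then have "x \<in> e" "x \<in> g" by simp_all
      then have "x = b" using b(1) \<open>a \<notin> g\<close> by auto
      then show ?thesis using \<open>x \<in> g\<close> by simp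
    qed
    then have "g \<in> {h1,h2}" using hS[of g] g(2,3) by simp
    then show "q \<in> {{e,h1},{e,h2}}" using g(1) by auto
  next
    assume "q \<in> {{e,h1},{e,h2}}"
    then obtain h where hh: "h \<in> {h1,h2}" and qh: "q = {e,h}" by blast
    have hp: "h \<in> edges G" "b \<in> h" "h \<noteq> e" "h \<inter> f = {}" "h \<noteq> f" using hprop[OF hh] by simp_all
    have "b \<in> e \<inter> h" using b(1) hp(2) by simp
    then have qE1: "q \<in> edges (line_graph G)" unfolding qh mem_edges_LG using eE hp(1,3)
      by (intro exI[of _ e] exI[of _ h]) auto
    have pq_ne: "p \<noteq> q"
    proof
      assume "p = q" then have "{e,f} = {e,h}" using p_def qh by simp
      then have "f = h" using ef by (simp add: doubleton_eq_iff)
      then show False using hp(5) by simp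
    qed
    have "e \<in> p \<inter> q" using p_def qh by simp
    then have pqi: "p \<inter> q \<noteq> {}" by blast
    have "\<exists>e' f'. {p,q} = {e',f'} \<and> e' \<in> edges (line_graph G) \<and> f' \<in> edges (line_graph G)
       \<and> e' \<noteq> f' \<and> e' \<inter> f' \<noteq> {}"
      using pE1 qE1 pq_ne pqi by blast
    then have "{p,q} \<in> edges (line_graph (line_graph G))" by (simp only: mem_edges_LG)
    moreover have "\<not> (\<exists>T\<in>calT G. {p,q} \<subseteq> T)"
      using not_removed[of f h e G] hp(4,5) ef hp(3) unfolding p_def qh
      by (simp add: Int_commute)
    moreover have "e \<in> p" "e \<in> q" using p_def qh by simp_all
    ultimately show "{p,q} \<in> edges (reduced_clique G e)"
      unfolding rc_edges red_edges using pE1 qE1 by simp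
  qed
  have "{q. {p,q} \<in> edges (reduced_clique G e)} = {{e,h1},{e,h2}}"
    using char by blast
  moreover have "{e,h1} \<noteq> {e,h2}"
  proof
    assume "{e,h1} = {e,h2}"
    then have "h1 = h2 \<or> (e = h2 \<and> h1 = e)" by (simp add: doubleton_eq_iff)
    then show False using h12(2) hprop[of h1] hprop[of h2] by auto
  qed
  moreover have "f \<notin> {e,h1}" "f \<notin> {e,h2}" using ef hprop[of h1] hprop[of h2] by auto
  ultimately show ?thesis unfolding p_def by (intro exI[of _ "{e,h1}"] exI[of _ "{e,h2}"]) simp
qed

lemma open_nbr:
  assumes sg: "simple_graph G" and cub: "cubic G" and tf: "triangle_free G"
    and vl: "valid_labeling G lam"
    and eE: "e \<in> edges G" and fE: "f \<in> edges G" and ef: "e \<noteq> f" and efi: "e \<inter> f \<noteq> {}"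
  shows "\<exists>ob. e \<in> ob \<and> f \<notin> ob \<and> {{e,f},ob} \<in> edges (reduced_L2 G) \<and> lam {{e,f},ob} = 1 \<and>
     (\<forall>q. e \<in> q \<longrightarrow> {{e,f},q} \<in> edges (reduced_L2 G) \<longrightarrow> lam {{e,f},q} = 1 \<longrightarrow> q = ob)"
proof -
  define p where "p = {e,f}"
  obtain q1 q2 where q: "q1 \<noteq> q2" "{q. {p,q} \<in> edges (reduced_clique G e)} = {q1,q2}"
    "f \<notin> q1" "f \<notin> q2" "e \<in> q1" "e \<in> q2"
    using clique_nbrs[OF sg cub tf eE fE ef efi] unfolding p_def by (elim exE conjE)
  have N: "{p,q} \<in> edges (reduced_clique G e) \<longleftrightarrow> q \<in> {q1,q2}" for q
  proof -
    have "{p,q} \<in> edges (reduced_clique G e) \<longleftrightarrow> q \<in> {q. {p,q} \<in> edges (reduced_clique G e)}" by simp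
    then show ?thesis unfolding q(2) .
  qed
  have pE1: "p \<in> edges (line_graph G)" unfolding p_def mem_edges_LG using eE fE ef efi by blast
  have pV: "p \<in> verts (reduced_clique G e)" unfolding rc_verts using pE1 p_def by simp
  have lab: "lam x \<in> {0,1}" if "x \<in> edges (reduced_L2 G)" for x
    using vl that unfolding valid_labeling_def labeling_def by blast
  have rcsub: "x \<in> edges (reduced_L2 G)" if "x \<in> edges (reduced_clique G e)" for x
    using that unfolding rc_edges by simp
  obtain w u where wu: "{p,w} \<in> edges (reduced_clique G e)" "{p,u} \<in> edges (reduced_clique G e)"
      "lam {p,w} = 1 - lam {p,u}"
    using vl eE pV unfolding valid_labeling_def by blast
  have lw: "lam {p,w} \<in> {0,1}" and lu: "lam {p,u} \<in> {0,1}"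
    using lab rcsub wu by blast+
  have w: "w \<in> {q1,q2}" and u: "u \<in> {q1,q2}" using N wu by blast+
  have wu_ne: "w \<noteq> u" using wu(3) lw by auto
  have cover: "q = w \<or> q = u" if "q \<in> {q1,q2}" for q using that w u wu_ne by auto
  obtain ob ob' where oo: "ob \<in> {q1,q2}" "\<forall>q\<in>{q1,q2}. q = ob \<or> q = ob'"
      "lam {p,ob} = 1" "lam {p,ob'} = 0"
  proof (cases "lam {p,w} = 1")
    case True
    have "lam {p,u} = 0" using wu(3) True by simp
    show ?thesis by (rule that[of w u]) (use w cover True \<open>lam {p,u} = 0\<close> in auto)
  next
    case False
    have "lam {p,w} = 0" using False lw by auto
    then have "lam {p,u} = 1" using wu(3) lu by auto
    show ?thesis by (rule that[of u w]) (use u cover \<open>lam {p,w} = 0\<close> \<open>lam {p,u} = 1\<close> in auto)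
  qed
  have o_in: "ob \<in> {q1,q2}" using oo(1) .
  have oprops: "e \<in> ob" "f \<notin> ob" using o_in q(3-6) by auto
  have oedge: "{p,ob} \<in> edges (reduced_L2 G)" using rcsub N o_in by blast
  have uniq: "q = ob" if "e \<in> q" "{p,q} \<in> edges (reduced_L2 G)" "lam {p,q} = 1" for q
  proof -
    have E2: "{p,q} \<in> edges (line_graph (line_graph G))" using that(2) unfolding red_edges by simp
    obtain r where r: "{p,q} = {q,r}" "q \<in> edges (line_graph G)"
      using LG_edge_at[OF E2, of q] by auto
    have "{p,q} \<subseteq> {f \<in> edges (line_graph G). e \<in> f}" using pE1 r(2) that(1) p_def by simp
    then have "{p,q} \<in> edges (reduced_clique G e)" unfolding rc_edges using that(2) by simp
    then have "q \<in> {q1,q2}" using N by simp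
    then have "q = ob \<or> q = ob'" using oo(2) by blast
    then show "q = ob" using that(3) oo(4) by auto
  qed
  show ?thesis unfolding p_def[symmetric]
    by (intro exI[of _ ob] conjI allI impI oprops oedge oo(3)) (rule uniq; assumption)
qed

lemma LG_pow: "edges (line_graph H) \<subseteq> Pow (edges H)"
proof
  fix x assume "x \<in> edges (line_graph H)"
  then obtain e f where "x = {e,f}" "e \<in> edges H" "f \<in> edges H" unfolding mem_edges_LG by blast
  then show "x \<in> Pow (edges H)" by simp
qed

theorem lemma2p4:
  fixes G :: "'a ugraph" and lam :: "'a set set set \<Rightarrow> nat"
  assumes "finite_graph G" and "simple_graph G" and "connected_graph G"
    and "bridgeless G" and "triangle_free G" and "cubic G"
    and "valid_labeling G lam"
  shows "disjoint_union_of_cycles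
           (edge_induced {f \<in> edges (reduced_L2 G). lam f = 1})"
proof -
  note sg = assms(2) and tf = assms(5) and cub = assms(6) and vl = assms(7)
  define F where "F = {f \<in> edges (reduced_L2 G). lam f = 1}"
  have finV: "finite (verts G)" using assms(1) unfolding finite_graph_def .
  have "edges G \<subseteq> Pow (verts G)"
  proof
    fix e assume "e \<in> edges G"
    then have "\<exists>u v. u \<noteq> v \<and> e = {u, v} \<and> u \<in> verts G \<and> v \<in> verts G"
      using sg unfolding simple_graph_def by blast
    then show "e \<in> Pow (verts G)" by auto
  qed
  then have finE: "finite (edges G)" using finV by (meson finite_Pow_iff finite_subset)
  have finE1: "finite (edges (line_graph G))" using finE LG_pow by (meson finite_Pow_iff finite_subset)
  have finE2: "finite (edges (line_graph (line_graph G)))" using finE1 LG_pow by (meson finite_Pow_iff finite_subset)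
  have FE2: "F \<subseteq> edges (line_graph (line_graph G))" unfolding F_def red_edges by auto
  have finF: "finite F" using finE2 FE2 by (rule finite_subset[rotated])
  have two: "\<forall>x\<in>F. \<exists>u v. u\<noteq>v \<and> x={u,v}"
  proof
    fix x assume "x \<in> F"
    then have "x \<in> edges (line_graph (line_graph G))" using FE2 by blast
    then obtain u v where "x = {u,v}" "u \<noteq> v" unfolding mem_edges_LG by blast
    then show "\<exists>u v. u\<noteq>v \<and> x={u,v}" by blast
  qed
  have d2: "deg2 F" unfolding deg2_def
  proof
    fix v assume "v \<in> \<Union>F"
    then obtain x where x: "x \<in> F" "v \<in> x" by blast
    have "x \<in> edges (line_graph (line_graph G))" using x(1) FE2 by blast
    then have "v \<in> edges (line_graph G)" using LG_edge_at[OF _ x(2)] by blast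
    then obtain e f where v: "v = {e,f}" "e \<in> edges G" "f \<in> edges G" "e \<noteq> f" "e \<inter> f \<noteq> {}"
      unfolding mem_edges_LG by blast
    obtain oe where oe: "e \<in> oe" "f \<notin> oe" "{{e,f},oe} \<in> edges (reduced_L2 G)" "lam {{e,f},oe} = 1"
      "\<forall>q. e \<in> q \<longrightarrow> {{e,f},q} \<in> edges (reduced_L2 G) \<longrightarrow> lam {{e,f},q} = 1 \<longrightarrow> q = oe"
      using open_nbr[OF sg cub tf vl v(2,3,4,5)] by (elim exE conjE)
    have fe: "f \<noteq> e" "f \<inter> e \<noteq> {}" using v(4,5) by (auto simp: Int_commute)
    have vfe: "{f,e} = v" using v(1) by (simp add: insert_commute)
    obtain of1 where of1: "f \<in> of1" "e \<notin> of1" "{v,of1} \<in> edges (reduced_L2 G)" "lam {v,of1} = 1"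
      "\<forall>q. f \<in> q \<longrightarrow> {v,q} \<in> edges (reduced_L2 G) \<longrightarrow> lam {v,q} = 1 \<longrightarrow> q = of1"
      using open_nbr[OF sg cub tf vl v(3,2) fe] unfolding vfe by (elim exE conjE)
    have oe': "{v,oe} \<in> edges (reduced_L2 G)" "lam {v,oe} = 1"
      "\<forall>q. e \<in> q \<longrightarrow> {v,q} \<in> edges (reduced_L2 G) \<longrightarrow> lam {v,q} = 1 \<longrightarrow> q = oe"
      using oe(3,4,5) unfolding v(1)[symmetric] by simp_all
    have ne1: "oe \<noteq> of1" using oe(2) of1(1) by blast
    have ne2: "oe \<noteq> v" using oe(2) v(1) by blast
    have ne3: "of1 \<noteq> v" using of1(2) v(1) by blast
    have eq: "{x\<in>F. v\<in>x} = {{v,oe},{v,of1}}"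
    proof (rule set_eqI)
      fix y
      show "y \<in> {x\<in>F. v\<in>x} \<longleftrightarrow> y \<in> {{v,oe},{v,of1}}"
      proof
        assume "y \<in> {x\<in>F. v\<in>x}"
        then have yF: "y \<in> edges (reduced_L2 G)" "lam y = 1" "v \<in> y" unfolding F_def by simp_all
        have E2y: "y \<in> edges (line_graph (line_graph G))" using yF(1) unfolding red_edges by simp
        obtain q where q: "y = {v,q}" "v \<inter> q \<noteq> {}"
          using LG_edge_at[OF E2y yF(3)] by (elim exE conjE)
        have yq: "{v,q} \<in> edges (reduced_L2 G)" "lam {v,q} = 1" using yF q(1) by simp_all
        have "e \<in> q \<or> f \<in> q" using q(2) v(1) by blast
        then have "q = oe \<or> q = of1"
        proof
          assume "e \<in> q" then show ?thesis using oe'(3) yq by simp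
        next
          assume "f \<in> q" then show ?thesis using of1(5) yq by simp
        qed
        then show "y \<in> {{v,oe},{v,of1}}" using q(1) by blast
      next
        assume "y \<in> {{v,oe},{v,of1}}"
        then have "y = {v,oe} \<or> y = {v,of1}" by simp
        then show "y \<in> {x\<in>F. v\<in>x}" unfolding F_def using oe'(1,2) of1(3,4) by auto
      qed
    qed
    show "\<exists>a b. a \<noteq> b \<and> a \<noteq> v \<and> b \<noteq> v \<and> {x\<in>F. v\<in>x} = {{v,a},{v,b}}"
      by (intro exI[of _ oe] exI[of _ of1] conjI ne1 ne2 ne3 eq)
  qed
  show ?thesis using two_reg_cycles[OF finF two d2] unfolding F_def .
qed

end
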